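(* Let $\nu\propto e^{-f}$ and suppose $X_t\sim\rho_t$ evolves according to the Langevin dynamics $dX_t=-\nabla f(X_t)\,dt+\sqrt2\,dW_t$; let $\rho_{0,t}$ be the joint law of $(X_0,X_t)$. Then (under sufficient regularity to differentiate under the integral) for all $t>0$, $$\frac{d}{dt}\mathsf{MI}_\Phi(\rho_{0,t})=-\mathsf{FI}^{\mathsf M}_\Phi(\rho_{0,t}),$$ where for a joint distribution $\rho^{XY}$ the $\Phi$-mutual Fisher information is $\mathsf{FI}^{\mathsf M}_\Phi(\rho^{XY}):=\mathbb E_{x\sim\rho^X}\big[\mathsf{FI}_\Phi(\rho^{Y\mid X=x}\|\rho^Y)\big]$.
   Context: Throughout, $\Phi:[0,\infty)\to\mathbb R$ is a twice-differentiable strictly convex function with $\Phi(1)=0$. For probability distributions $\mu,\nu$ on $\mathbb R^d$ with $\mu\ll\nu$, the $\Phi$-divergence is $\mathsf D_\Phi(\mu\|\nu)=\int\Phi\big(\frac{d\mu}{d\nu}\big)\,d\nu$, and $\mathsf D_\Phi(\mu\|\nu)=+\infty$ if $\mu\not\ll\nu$. For a random pair $(X,Y)$ with joint law $\rho^{XY}$ and marginals $\rho^X,\rho^Y$, the $\Phi$-mutual information is $\mathsf{MI}_\Phi(\rho^{XY})=\mathsf D_\Phi(\rho^{XY}\|\rho^X\otimes\rho^Y)=\mathbb E_{x\sim\rho^X}[\mathsf D_\Phi(\rho^{Y\mid X=x}\|\rho^Y)]$. For distributions with densities (identified with the distributions), the $\Phi$-Fisher information is $\mathsf{FI}_\Phi(\mu\|\nu)=\mathbb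 E_\nu\big[\|\nabla\frac{\mu}{\nu}\|^2\,\Phi''(\frac{\mu}{\nu})\big]$. $W_t$ is standard Brownian motion on $\mathbb R^d$. *)

theory Defs
  imports "HOL-Analysis.Analysis" "HOL-Probability.Probability"
begin

definition strictly_convex_on :: "real set \<Rightarrow> (real \<Rightarrow> real) \<Rightarrow> bool" where
  "strictly_convex_on S g \<longleftrightarrow>
     (\<forall>x\<in>S. \<forall>y\<in>S. x \<noteq> y \<longrightarrow>
        (\<forall>u::real. 0 < u \<and> u < 1 \<longrightarrow> g ((1 - u) * x + u * y) < (1 - u) * g x + u * g y))"

definition grad :: "('a::euclidean_space \<Rightarrow> real) \<Rightarrow> 'a \<Rightarrow> 'a" where
  "grad g y = (\<Sum>i\<in>Basis. frechet_derivative g (at y) i *\<^sub>R i)"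

definition divg :: "('a::euclidean_space \<Rightarrow> 'a) \<Rightarrow> 'a \<Rightarrow> real" where
  "divg V y = (\<Sum>i\<in>Basis. frechet_derivative V (at y) i \<bullet> i)"

definition phi_div :: "(real \<Rightarrow> real) \<Rightarrow> ('a::euclidean_space \<Rightarrow> real) \<Rightarrow> ('a \<Rightarrow> real) \<Rightarrow> real" where
  "phi_div Phi mu nu = (\<integral>y. Phi (mu y / nu y) * nu y \<partial>lborel)"

definition phi_fisher :: "(real \<Rightarrow> real) \<Rightarrow> ('a::euclidean_space \<Rightarrow> real) \<Rightarrow> ('a \<Rightarrow> real) \<Rightarrow> real" where
  "phi_fisher Phi mu nu =
     (\<integral>y. (norm (grad (\<lambda>z. mu z / nu z) y))\<^sup>2 * deriv (deriv Phi) (mu y / nu y) * nu y \<partial>lborel)"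

text \<open>A joint law of (X,Y) given by the law M of X and conditional Lebesgue densities
  kappa x of Y given X = x.  The density of the Y-marginal:\<close>
definition marginal :: "'a measure \<Rightarrow> ('a \<Rightarrow> 'b \<Rightarrow> real) \<Rightarrow> 'b \<Rightarrow> real" where
  "marginal M kappa y = (\<integral>x. kappa x y \<partial>M)"

definition phi_MI :: "(real \<Rightarrow> real) \<Rightarrow> 'a measure \<Rightarrow> ('a \<Rightarrow> 'b::euclidean_space \<Rightarrow> real) \<Rightarrow> real" where
  "phi_MI Phi M kappa = (\<integral>x. phi_div Phi (kappa x) (marginal M kappa) \<partial>M)"

definition phi_MFI :: "(real \<Rightarrow> real) \<Rightarrow> 'a measure \<Rightarrow> ('a \<Rightarrow> 'b::euclidean_space \<Rightarrow> real) \<Rightarrow> real" where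
  "phi_MFI Phi M kappa = (\<integral>x. phi_fisher Phi (kappa x) (marginal M kappa) \<partial>M)"

text \<open>Probability flux of the Langevin dynamics dX = -grad f dt + sqrt 2 dW for a density u:
  J = u grad f + grad u  (so the Fokker--Planck equation reads  d/dt u = div J).\<close>
definition langevin_flux :: "('a::euclidean_space \<Rightarrow> real) \<Rightarrow> ('a \<Rightarrow> real) \<Rightarrow> 'a \<Rightarrow> 'a" where
  "langevin_flux f u z = u z *\<^sub>R grad f z + grad u z"

definition langevin_FP :: "('a::euclidean_space \<Rightarrow> real) \<Rightarrow> (real \<Rightarrow> 'a \<Rightarrow> real) \<Rightarrow> bool" where
  "langevin_FP f u \<longleftrightarrow>
     (\<forall>s>0. \<forall>y. u s differentiable (at y)
              \<and> langevin_flux f (u s) differentiable (at y)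
              \<and> ((\<lambda>s'. u s' y) has_real_derivative divg (langevin_flux f (u s)) y) (at s))"

end

theory Submission
  imports Defs
begin

lemma lborel_translate:
  fixes h :: "'a::euclidean_space \<Rightarrow> real" and c :: 'a
  assumes "integrable lborel h"
  shows "integrable lborel (\<lambda>y. h (y + c))" "(\<integral>y. h (y + c) \<partial>lborel) = (\<integral>y. h y \<partial>lborel)"
proof -
  have hm: "h \<in> borel_measurable borel" using borel_measurable_integrable[OF assms] by simp
  have "integrable (distr lborel borel ((+) c)) h" using assms by (simp add: lborel_distr_plus)
  then have "integrable lborel (\<lambda>y. h (c + y))"
    by (subst (asm) integrable_distr_eq) (simp_all add: hm)
  then show "integrable lborel (\<lambda>y. h (y + c))" by (simp add: add.commute)
  have "(\<integral>y. h y \<partial>(distr lborel borel ((+) c))) = (\<integral>y. h (c + y) \<partial>lborel)"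
    by (rule integral_distr) (simp_all add: hm)
  then show "(\<integral>y. h (y + c) \<partial>lborel) = (\<integral>y. h y \<partial>lborel)" by (simp add: lborel_distr_plus add.commute)
qed

lemma div_dir_zero:
  fixes g g' :: "'a::euclidean_space \<Rightarrow> real" and e :: 'a
  assumes der: "\<And>y s. ((\<lambda>s. g (y + s *\<^sub>R e)) has_real_derivative g' (y + s *\<^sub>R e)) (at s)"
    and gi: "integrable lborel g" and g'i: "integrable lborel g'"
  shows "(\<integral>y. g' y \<partial>lborel) = 0"
proof -

  have g'm[measurable]: "g' \<in> borel_measurable borel" using borel_measurable_integrable[OF g'i] by simp
  define H where "H = (\<lambda>(s::real, y::'a). indicator {0..1} s *\<^sub>R g' (y + s *\<^sub>R e))"
  have Hm: "H \<in> borel_measurable (lborel \<Otimes>\<^sub>M lborel)" unfolding H_def by measurable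
  have ni: "integrable lborel (\<lambda>y. norm (g' y))" using g'i by simp
  have eqn: "(\<lambda>s. \<integral>y. norm (H (s,y)) \<partial>lborel) = (\<lambda>s. indicator {0..1} s * (\<integral>y. norm (g' y) \<partial>lborel))"
  proof
    fix s
    have "(\<integral>y. norm (H (s,y)) \<partial>lborel) = (\<integral>y. indicator {0..1} s * norm (g' (y + s *\<^sub>R e)) \<partial>lborel)"
      unfolding H_def by (simp add: abs_mult)
    also have "\<dots> = indicator {0..1} s * (\<integral>y. norm (g' (y + s *\<^sub>R e)) \<partial>lborel)" by simp
    also have "\<dots> = indicator {0..1} s * (\<integral>y. norm (g' y) \<partial>lborel)"
      using lborel_translate(2)[OF ni, of "s *\<^sub>R e"] by simp
    finally show "(\<integral>y. norm (H (s,y)) \<partial>lborel) = indicator {0..1} s * (\<integral>y. norm (g' y) \<partial>lborel)" .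
  qed
  have Hint: "integrable (lborel \<Otimes>\<^sub>M lborel) H"
  proof (rule lborel_pair.Fubini_integrable[OF Hm])
    show "integrable lborel (\<lambda>s. \<integral>y. norm (H (s,y)) \<partial>lborel)"
      unfolding eqn by (intro integrable_mult_left) (simp add: integrable_indicator_iff)
    show "AE s in lborel. integrable lborel (\<lambda>y. H (s, y))"
      unfolding H_def using lborel_translate(1)[OF g'i] by simp
  qed
  have "integral\<^sup>L (lborel \<Otimes>\<^sub>M lborel) H = (\<integral>s. (\<integral>y. H (s,y) \<partial>lborel) \<partial>lborel)"
    by (rule lborel_pair.integral_fst'[OF Hint, symmetric])
  also have "\<dots> = (\<integral>s. indicator {0..1} (s::real) * (\<integral>y. g' y \<partial>lborel) \<partial>lborel)"
  proof -
    have "\<And>s. (\<integral>y. H (s,y) \<partial>lborel) = indicator {0..1} s * (\<integral>y. g' y \<partial>lborel)"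
      unfolding H_def using lborel_translate(2)[OF g'i] by simp
    then show ?thesis by (simp only:)
  qed
  also have "\<dots> = measure lborel {0::real..1} * (\<integral>y. g' y \<partial>lborel)" by simp
  also have "\<dots> = (\<integral>y. g' y \<partial>lborel)" by (simp add: measure_lborel_Icc)
  finally have A: "integral\<^sup>L (lborel \<Otimes>\<^sub>M lborel) H = (\<integral>y. g' y \<partial>lborel)" .
  define F where "F = (\<lambda>s (y::'a). indicator {0..1} s *\<^sub>R g' (y + s *\<^sub>R e))"
  have HF: "H = case_prod F" unfolding H_def F_def by simp
  have Fint: "integrable (lborel \<Otimes>\<^sub>M lborel) (case_prod F)" using Hint HF by simp
  have B: "AE y in lborel. (\<integral>s. F s y \<partial>lborel) = g (y + e) - g y"
    using lborel_pair.AE_integrable_snd[OF Fint]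
  proof eventually_elim
    case (elim y)
    then have si: "set_integrable lborel {0..1} (\<lambda>s. g' (y + s *\<^sub>R e))"
      unfolding set_integrable_def F_def .
    have "(\<integral>s. F s y \<partial>lborel) = (LINT s : {0..1} | lborel. g' (y + s *\<^sub>R e))"
      unfolding F_def set_lebesgue_integral_def ..
    also have "\<dots> = integral {0..1} (\<lambda>s. g' (y + s *\<^sub>R e))"
      by (rule set_borel_integral_eq_integral(2)[OF si])
    also have "\<dots> = g (y + 1 *\<^sub>R e) - g (y + 0 *\<^sub>R e)"
    proof (rule integral_unique, rule fundamental_theorem_of_calculus)
      fix s :: real
      show "((\<lambda>s. g (y + s *\<^sub>R e)) has_vector_derivative g' (y + s *\<^sub>R e)) (at s within {0..1})"
        using der[of y s] by (simp add: has_real_derivative_iff_has_vector_derivative has_vector_derivative_at_within)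
    qed simp
    finally show ?case by simp
  qed
  have "integral\<^sup>L (lborel \<Otimes>\<^sub>M lborel) H = (\<integral>y. (\<integral>s. F s y \<partial>lborel) \<partial>lborel)"
    unfolding HF by (rule lborel_pair.integral_snd[OF Fint, symmetric])
  also have "\<dots> = (\<integral>y. g (y + e) - g y \<partial>lborel)"
  proof -
    have m1: "(\<lambda>y. \<integral>s. F s y \<partial>lborel) \<in> borel_measurable lborel"
      using borel_measurable_integrable[OF lborel_pair.integrable_snd[OF Fint]] .
    have m2: "(\<lambda>y. g (y + e) - g y) \<in> borel_measurable lborel"
      using borel_measurable_integrable[OF Bochner_Integration.integrable_diff[OF lborel_translate(1)[OF gi] gi]] .
    show ?thesis by (rule integral_cong_AE) (use B m1 m2 in auto)
  qed
  also have "\<dots> = 0"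
    using lborel_translate[OF gi, of e] gi by simp
  finally show ?thesis using A by simp
qed

lemma dir_deriv:
  fixes G :: "'a::euclidean_space \<Rightarrow> 'a"
  assumes "G differentiable (at (y + s *\<^sub>R e))"
  shows "((\<lambda>s. G (y + s *\<^sub>R e) \<bullet> e) has_real_derivative (frechet_derivative G (at (y + s *\<^sub>R e)) e \<bullet> e)) (at s)"
proof -
  define G' where "G' = frechet_derivative G (at (y + s *\<^sub>R e))"
  have d1: "((\<lambda>s. y + s *\<^sub>R e) has_derivative (\<lambda>h. h *\<^sub>R e)) (at s)"
    by (auto intro!: derivative_eq_intros)
  have d2: "(G has_derivative G') (at (y + s *\<^sub>R e))"
    unfolding G'_def using assms frechet_derivative_works by blast
  have lin: "linear G'" using d2 has_derivative_linear by blast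
  have d3: "((\<lambda>s. G (y + s *\<^sub>R e)) has_derivative (\<lambda>h. G' (h *\<^sub>R e))) (at s)"
    using diff_chain_at[OF d1 d2] by (simp add: o_def)
  have d4: "((\<lambda>s. G (y + s *\<^sub>R e) \<bullet> e) has_derivative (\<lambda>h. G' (h *\<^sub>R e) \<bullet> e)) (at s)"
    using bounded_linear.has_derivative[OF bounded_linear_inner_left d3] .
  have "(\<lambda>h. G' (h *\<^sub>R e) \<bullet> e) = (\<lambda>h. (G' e \<bullet> e) * h)"
    using linear_scale[OF lin] by (simp add: mult.commute)
  then show ?thesis using d4 unfolding has_field_derivative_def G'_def by simp
qed

lemma div_zero:
  fixes G :: "'a::euclidean_space \<Rightarrow> 'a"
  assumes dG: "\<forall>y. G differentiable (at y)" and iG: "integrable lborel G"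
    and iD: "\<forall>i\<in>Basis. integrable lborel (\<lambda>y. frechet_derivative G (at y) i \<bullet> i)"
  shows "integrable lborel (divg G)" "(\<integral>y. divg G y \<partial>lborel) = 0"
proof -
  have dg: "divg G = (\<lambda>y. \<Sum>i\<in>Basis. frechet_derivative G (at y) i \<bullet> i)"
    unfolding divg_def by auto
  show "integrable lborel (divg G)" unfolding dg using iD by auto
  have "(\<integral>y. divg G y \<partial>lborel) = (\<Sum>i\<in>Basis. \<integral>y. frechet_derivative G (at y) i \<bullet> i \<partial>lborel)"
    unfolding dg using iD by (simp add: Bochner_Integration.integral_sum)
  also have "\<dots> = 0"
  proof (rule sum.neutral, rule ballI)
    fix i :: 'a assume i: "i \<in> Basis"
    show "(\<integral>y. frechet_derivative G (at y) i \<bullet> i \<partial>lborel) = 0"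
    proof (rule div_dir_zero[where g = "\<lambda>y. G y \<bullet> i" and e = i])
      show "integrable lborel (\<lambda>y. G y \<bullet> i)" using iG by simp
      show "integrable lborel (\<lambda>y. frechet_derivative G (at y) i \<bullet> i)" using iD i by blast
      fix y s
      show "((\<lambda>s. G (y + s *\<^sub>R i) \<bullet> i) has_real_derivative frechet_derivative G (at (y + s *\<^sub>R i)) i \<bullet> i) (at s)"
        using dir_deriv dG by blast
    qed
  qed
  finally show "(\<integral>y. divg G y \<partial>lborel) = 0" .
qed

lemma grad_works:
  fixes g :: "'a::euclidean_space \<Rightarrow> real"
  assumes "g differentiable (at y)"
  shows "(g has_derivative (\<lambda>v. grad g y \<bullet> v)) (at y)"
proof -
  define L where "L = frechet_derivative g (at y)"
  have d: "(g has_derivative L) (at y)" unfolding L_def using assms frechet_derivative_works by blast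
  have lin: "linear L" using d has_derivative_linear by blast
  have "L v = grad g y \<bullet> v" for v
  proof -
    have "L v = L (\<Sum>i\<in>Basis. (v \<bullet> i) *\<^sub>R i)" by (simp add: euclidean_representation)
    also have "\<dots> = (\<Sum>i\<in>Basis. (v \<bullet> i) * L i)"
      by (simp add: linear_sum[OF lin] linear_scale[OF lin])
    also have "\<dots> = grad g y \<bullet> v"
      unfolding grad_def L_def by (simp add: inner_sum_left inner_sum_right mult.commute inner_commute)
    finally show ?thesis .
  qed
  then have "L = (\<lambda>v. grad g y \<bullet> v)" by auto
  then show ?thesis using d by simp
qed

lemma grad_eq:
  fixes g :: "'a::euclidean_space \<Rightarrow> real"
  assumes "(g has_derivative (\<lambda>v. w \<bullet> v)) (at y)"
  shows "grad g y = w"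
proof -
  have "frechet_derivative g (at y) = (\<lambda>v. w \<bullet> v)" using frechet_derivative_at[OF assms] by simp
  then show ?thesis unfolding grad_def using euclidean_representation[of w] by (simp add: inner_commute)
qed

lemma divg_eq:
  fixes V :: "'a::euclidean_space \<Rightarrow> 'a"
  assumes "(V has_derivative V') (at y)"
  shows "divg V y = (\<Sum>i\<in>Basis. V' i \<bullet> i)"
  unfolding divg_def using frechet_derivative_at[OF assms] by simp

lemma time_deriv:
  fixes p q :: "real \<Rightarrow> real"
  assumes dp: "(p has_real_derivative dp) (at t)" and dq: "(q has_real_derivative dq) (at t)"
    and qpos: "q t > 0" and dPhi: "Phi differentiable (at (p t / q t))"
  shows "deriv (\<lambda>s. Phi (p s / q s) * q s) t
      = deriv Phi (p t / q t) * dp + (Phi (p t / q t) - p t / q t * deriv Phi (p t / q t)) * dq"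
proof -
  have h1: "((\<lambda>s. p s / q s) has_real_derivative (dp * q t - p t * dq) / (q t * q t)) (at t)"
    using DERIV_divide[OF dp dq] qpos by simp
  have h0: "(Phi has_real_derivative deriv Phi (p t / q t)) (at (p t / q t))"
    using dPhi DERIV_deriv_iff_real_differentiable by blast
  have h2: "((\<lambda>s. Phi (p s / q s)) has_real_derivative deriv Phi (p t / q t) * ((dp * q t - p t * dq) / (q t * q t))) (at t)"
    using DERIV_chain2[OF h0 h1] .
  have h3: "((\<lambda>s. Phi (p s / q s) * q s) has_real_derivative
      deriv Phi (p t / q t) * ((dp * q t - p t * dq) / (q t * q t)) * q t + dq * Phi (p t / q t)) (at t)"
    using DERIV_mult[OF h2 dq] .
  have "deriv Phi (p t / q t) * ((dp * q t - p t * dq) / (q t * q t)) * q t + dq * Phi (p t / q t)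
      = deriv Phi (p t / q t) * dp + (Phi (p t / q t) - p t / q t * deriv Phi (p t / q t)) * dq"
    using qpos by (simp add: field_simps)
  then show ?thesis using DERIV_imp_deriv[OF h3] by simp
qed

lemma pointwise_div:
  fixes P Q f :: "'a::euclidean_space \<Rightarrow> real" and Phi :: "real \<Rightarrow> real"
  assumes Qpos: "Q y > 0" and dP: "P differentiable (at y)" and dQ: "Q differentiable (at y)"
    and dJP: "langevin_flux f P differentiable (at y)" and dJQ: "langevin_flux f Q differentiable (at y)"
    and dPhi: "Phi differentiable (at (P y / Q y))" and ddPhi: "deriv Phi differentiable (at (P y / Q y))"
  shows "divg (\<lambda>z. deriv Phi (P z / Q z) *\<^sub>R langevin_flux f P z
            + (Phi (P z / Q z) - P z / Q z * deriv Phi (P z / Q z)) *\<^sub>R langevin_flux f Q z) y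
     = deriv Phi (P y / Q y) * divg (langevin_flux f P) y
       + (Phi (P y / Q y) - P y / Q y * deriv Phi (P y / Q y)) * divg (langevin_flux f Q) y
       + (norm (grad (\<lambda>z. P z / Q z) y))\<^sup>2 * deriv (deriv Phi) (P y / Q y) * Q y"
proof -
  define ry where "ry = P y / Q y"
  define D1 where "D1 = deriv Phi ry"
  define D2 where "D2 = deriv (deriv Phi) ry"
  define gP where "gP = grad P y"
  define gQ where "gQ = grad Q y"
  define gr where "gr = (1 / Q y) *\<^sub>R (gP - ry *\<^sub>R gQ)"
  define JP where "JP = langevin_flux f P"
  define JQ where "JQ = langevin_flux f Q"
  define JP' where "JP' = frechet_derivative JP (at y)"
  define JQ' where "JQ' = frechet_derivative JQ (at y)"
  define a2y where "a2y = Phi ry - ry * D1"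
  have hP: "(P has_derivative (\<lambda>v. gP \<bullet> v)) (at y)" unfolding gP_def by (rule grad_works[OF dP])
  have hQ: "(Q has_derivative (\<lambda>v. gQ \<bullet> v)) (at y)" unfolding gQ_def by (rule grad_works[OF dQ])
  have hr0: "((\<lambda>z. P z / Q z) has_derivative (\<lambda>h. ((gP \<bullet> h) * Q y - P y * (gQ \<bullet> h)) / (Q y * Q y))) (at y)"
    using has_derivative_divide'[OF hP hQ] Qpos by simp
  have "(\<lambda>h. ((gP \<bullet> h) * Q y - P y * (gQ \<bullet> h)) / (Q y * Q y)) = (\<lambda>v. gr \<bullet> v)"
  proof
    fix h
    show "((gP \<bullet> h) * Q y - P y * (gQ \<bullet> h)) / (Q y * Q y) = gr \<bullet> h"
      unfolding gr_def ry_def using Qpos by (simp add: inner_diff_left field_simps)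
  qed
  with hr0 have hr: "((\<lambda>z. P z / Q z) has_derivative (\<lambda>v. gr \<bullet> v)) (at y)" by simp
  have gradr: "grad (\<lambda>z. P z / Q z) y = gr" by (rule grad_eq[OF hr])
  have h0: "(Phi has_real_derivative D1) (at ((\<lambda>z. P z / Q z) y))"
    unfolding D1_def ry_def using dPhi DERIV_deriv_iff_real_differentiable by simp
  have h00: "(deriv Phi has_real_derivative D2) (at ((\<lambda>z. P z / Q z) y))"
    unfolding D2_def ry_def using ddPhi DERIV_deriv_iff_real_differentiable by simp
  have ha1: "((\<lambda>z. deriv Phi (P z / Q z)) has_derivative (\<lambda>v. gr \<bullet> v * D2)) (at y)"
    using DERIV_compose_FDERIV[OF h00 hr] by simp
  have hPr: "((\<lambda>z. Phi (P z / Q z)) has_derivative (\<lambda>v. gr \<bullet> v * D1)) (at y)"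
    using DERIV_compose_FDERIV[OF h0 hr] by simp
  have ha2: "((\<lambda>z. Phi (P z / Q z) - P z / Q z * deriv Phi (P z / Q z)) has_derivative
      (\<lambda>v. gr \<bullet> v * D1 - (P y / Q y * (gr \<bullet> v * D2) + gr \<bullet> v * deriv Phi (P y / Q y)))) (at y)"
    using has_derivative_diff[OF hPr has_derivative_mult[OF hr ha1]] by simp
  have hJP: "(JP has_derivative JP') (at y)" unfolding JP'_def JP_def using dJP frechet_derivative_works by blast
  have hJQ: "(JQ has_derivative JQ') (at y)" unfolding JQ'_def JQ_def using dJQ frechet_derivative_works by blast
  have hG: "((\<lambda>z. deriv Phi (P z / Q z) *\<^sub>R JP z
            + (Phi (P z / Q z) - P z / Q z * deriv Phi (P z / Q z)) *\<^sub>R JQ z) has_derivative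
      (\<lambda>h. (deriv Phi (P y / Q y) *\<^sub>R JP' h + (gr \<bullet> h * D2) *\<^sub>R JP y)
         + ((Phi (P y / Q y) - P y / Q y * deriv Phi (P y / Q y)) *\<^sub>R JQ' h
            + (gr \<bullet> h * D1 - (P y / Q y * (gr \<bullet> h * D2) + gr \<bullet> h * deriv Phi (P y / Q y))) *\<^sub>R JQ y))) (at y)"
    by (rule has_derivative_add[OF has_derivative_scaleR[OF ha1 hJP] has_derivative_scaleR[OF ha2 hJQ]])
  have e1: "\<And>i. ((deriv Phi (P y / Q y) *\<^sub>R JP' i + (gr \<bullet> i * D2) *\<^sub>R JP y)
         + ((Phi (P y / Q y) - P y / Q y * deriv Phi (P y / Q y)) *\<^sub>R JQ' i
            + (gr \<bullet> i * D1 - (P y / Q y * (gr \<bullet> i * D2) + gr \<bullet> i * deriv Phi (P y / Q y))) *\<^sub>R JQ y)) \<bullet> i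
      = D1 * (JP' i \<bullet> i) + D2 * ((gr \<bullet> i) * (JP y \<bullet> i)) + a2y * (JQ' i \<bullet> i)
        - ry * D2 * ((gr \<bullet> i) * (JQ y \<bullet> i))"
    unfolding D1_def a2y_def ry_def by (simp add: inner_add_left algebra_simps)
  have "divg (\<lambda>z. deriv Phi (P z / Q z) *\<^sub>R langevin_flux f P z
            + (Phi (P z / Q z) - P z / Q z * deriv Phi (P z / Q z)) *\<^sub>R langevin_flux f Q z) y
     = (\<Sum>i\<in>Basis. D1 * (JP' i \<bullet> i) + D2 * ((gr \<bullet> i) * (JP y \<bullet> i)) + a2y * (JQ' i \<bullet> i)
        - ry * D2 * ((gr \<bullet> i) * (JQ y \<bullet> i)))"
    using divg_eq[OF hG] e1 unfolding JP_def JQ_def by simp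
  also have "\<dots> = D1 * (\<Sum>i\<in>Basis. JP' i \<bullet> i) + D2 * (\<Sum>i\<in>Basis. (gr \<bullet> i) * (JP y \<bullet> i))
      + a2y * (\<Sum>i\<in>Basis. JQ' i \<bullet> i) - ry * D2 * (\<Sum>i\<in>Basis. (gr \<bullet> i) * (JQ y \<bullet> i))"
    by (simp add: sum.distrib sum_subtractf sum_distrib_left)
  also have "\<dots> = D1 * divg JP y + D2 * (gr \<bullet> JP y) + a2y * divg JQ y - ry * D2 * (gr \<bullet> JQ y)"
    using divg_eq[OF hJP] divg_eq[OF hJQ] euclidean_inner[of gr "JP y"] euclidean_inner[of gr "JQ y"] by simp
  also have "\<dots> = D1 * divg JP y + a2y * divg JQ y + D2 * (gr \<bullet> JP y - ry * (gr \<bullet> JQ y))"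
    by (simp add: algebra_simps)
  also have "gr \<bullet> JP y - ry * (gr \<bullet> JQ y) = Q y * (gr \<bullet> gr)"
  proof -
    have "gr \<bullet> JP y - ry * (gr \<bullet> JQ y) = (P y - ry * Q y) * (gr \<bullet> grad f y) + gr \<bullet> (gP - ry *\<^sub>R gQ)"
      unfolding JP_def JQ_def langevin_flux_def gP_def gQ_def by (simp add: inner_add_right inner_diff_right algebra_simps)
    also have "P y - ry * Q y = 0" unfolding ry_def using Qpos by simp
    also have "gP - ry *\<^sub>R gQ = Q y *\<^sub>R gr" unfolding gr_def using Qpos by simp
    finally show ?thesis by simp
  qed
  finally show ?thesis
    unfolding gradr JP_def JQ_def D1_def D2_def a2y_def ry_def
    by (simp add: power2_norm_eq_inner algebra_simps)
qed

theorem mainTheorem2: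
  fixes f :: "'a::euclidean_space \<Rightarrow> real"
    and Phi :: "real \<Rightarrow> real"
    and rho0 :: "'a measure"
    and p :: "real \<Rightarrow> 'a \<Rightarrow> 'a \<Rightarrow> real"
    and t :: real
  assumes Phi_C2: "\<exists>Phi1 Phi2. \<forall>r\<ge>0. (Phi has_real_derivative Phi1 r) (at r within {0..})
                      \<and> (Phi1 has_real_derivative Phi2 r) (at r within {0..})"
    and Phi_C2_int: "\<forall>r>0. Phi differentiable (at r) \<and> deriv Phi differentiable (at r)"
    and Phi_convex: "strictly_convex_on {0..} Phi"
    and Phi_one: "Phi 1 = 0"
    \<comment> \<open>potential f, target nu \<propto> exp(-f)\<close>
    and f_diff: "\<forall>y. f differentiable (at y)"
    and gradf_diff: "\<forall>y. grad f differentiable (at y)"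
    and nu_normalizable: "integrable lborel (\<lambda>y. exp (- f y))"
    \<comment> \<open>law of X_0\<close>
    and rho0_prob: "prob_space rho0"
    and rho0_sets: "sets rho0 = sets borel"
    \<comment> \<open>p s x = Lebesgue density of X_s given X_0 = x (transition density of the Langevin dynamics)\<close>
    and p_meas: "\<forall>s>0. (\<lambda>(x, y). p s x y) \<in> borel_measurable borel"
    and p_pos: "\<forall>s>0. \<forall>x y. 0 < p s x y"
    and p_density: "\<forall>s>0. \<forall>x. integrable lborel (p s x) \<and> (\<integral>y. p s x y \<partial>lborel) = 1"
    and p_FP: "\<forall>x. langevin_FP f (\<lambda>s. p s x)"
    and p_init: "\<forall>x. \<forall>g::'a \<Rightarrow> real. bounded (range g) \<and> continuous_on UNIV g \<longrightarrow>
                   ((\<lambda>s. \<integral>y. g y * p s x y \<partial>lborel) \<longlongrightarrow> g x) (at_right 0)"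
    \<comment> \<open>regularity: the marginal rho_s = marginal rho0 (p s) is well defined and solves Fokker--Planck\<close>
    and p_int_x: "\<forall>s>0. \<forall>y. integrable rho0 (\<lambda>x. p s x y)"
    and marg_FP: "langevin_FP f (\<lambda>s. marginal rho0 (p s))"
    and t_pos: "t > 0"
    \<comment> \<open>regularity: differentiation under the integral signs is allowed at time t\<close>
    and reg_int: "\<forall>x. integrable lborel
          (\<lambda>y. deriv (\<lambda>s. Phi (p s x y / marginal rho0 (p s) y) * marginal rho0 (p s) y) t)"
    and reg_inner: "\<forall>x. ((\<lambda>s. phi_div Phi (p s x) (marginal rho0 (p s))) has_real_derivative
          (\<integral>y. deriv (\<lambda>s. Phi (p s x y / marginal rho0 (p s) y) * marginal rho0 (p s) y) t \<partial>lborel)) (at t)"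
    and reg_outer: "((\<lambda>s. phi_MI Phi rho0 (p s)) has_real_derivative
          (\<integral>x. deriv (\<lambda>s. phi_div Phi (p s x) (marginal rho0 (p s))) t \<partial>rho0)) (at t)"
    \<comment> \<open>regularity: boundary terms in the integration by parts vanish (the field G is C^1-type
        with G and all its partial derivatives integrable)\<close>
    and reg_ibp: "\<forall>x. let q = marginal rho0 (p t); r = (\<lambda>y. p t x y / q y);
                        G = (\<lambda>y. deriv Phi (r y) *\<^sub>R langevin_flux f (p t x) y
                               + (Phi (r y) - r y * deriv Phi (r y)) *\<^sub>R langevin_flux f q y)
                    in (\<forall>y. G differentiable (at y)) \<and> integrable lborel G
                       \<and> (\<forall>i\<in>Basis. integrable lborel (\<lambda>y. frechet_derivative G (at y) i \<bullet> i))"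
  shows "((\<lambda>s. phi_MI Phi rho0 (p s)) has_real_derivative - phi_MFI Phi rho0 (p t)) (at t)"
proof -
  define q where "q = (\<lambda>s. marginal rho0 (p s))"
  interpret R: prob_space rho0 by (rule rho0_prob)
  have qpos: "q t y > 0" for y
  proof -
    have int: "integrable rho0 (\<lambda>x. p t x y)" using p_int_x t_pos by blast
    have nn: "AE x in rho0. 0 \<le> p t x y" using p_pos t_pos by (simp add: less_imp_le)
    have ge: "0 \<le> q t y" unfolding q_def marginal_def using nn by (simp add: integral_nonneg_AE)
    have "q t y \<noteq> 0"
    proof
      assume "q t y = 0"
      then have "AE x in rho0. p t x y = 0"
        using integral_nonneg_eq_0_iff_AE[OF int nn] unfolding q_def marginal_def by simp
      then have "AE x in rho0. False"
      proof eventually_elim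
        case (elim x)
        have "0 < p t x y" using p_pos t_pos by blast
        then show ?case using elim by simp
      qed
      then show False using R.AE_False by simp
    qed
    with ge show ?thesis by simp
  qed
  have inner: "(\<integral>y. deriv (\<lambda>s. Phi (p s x y / marginal rho0 (p s) y) * marginal rho0 (p s) y) t \<partial>lborel)
      = - phi_fisher Phi (p t x) (marginal rho0 (p t))" for x
  proof -
    define G where "G = (\<lambda>y. deriv Phi (p t x y / q t y) *\<^sub>R langevin_flux f (p t x) y
                               + (Phi (p t x y / q t y) - p t x y / q t y * deriv Phi (p t x y / q t y)) *\<^sub>R langevin_flux f (q t) y)"
    define FI where "FI = (\<lambda>y. (norm (grad (\<lambda>z. p t x z / q t z) y))\<^sup>2 * deriv (deriv Phi) (p t x y / q t y) * q t y)"
    define dd where "dd = (\<lambda>y. deriv (\<lambda>s. Phi (p s x y / q s y) * q s y) t)"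
    have RG: "(\<forall>y. G differentiable (at y)) \<and> integrable lborel G
              \<and> (\<forall>i\<in>Basis. integrable lborel (\<lambda>y. frechet_derivative G (at y) i \<bullet> i))"
      using reg_ibp unfolding Let_def G_def q_def by blast
    have divG: "integrable lborel (divg G)" "(\<integral>y. divg G y \<partial>lborel) = 0"
      using div_zero[of G] RG by auto
    have FPp: "\<forall>y. p t x differentiable (at y) \<and> langevin_flux f (p t x) differentiable (at y)
                \<and> ((\<lambda>s'. p s' x y) has_real_derivative divg (langevin_flux f (p t x)) y) (at t)"
      using p_FP t_pos unfolding langevin_FP_def by blast
    have FPq: "\<forall>y. q t differentiable (at y) \<and> langevin_flux f (q t) differentiable (at y)
                \<and> ((\<lambda>s'. q s' y) has_real_derivative divg (langevin_flux f (q t)) y) (at t)"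
      using marg_FP t_pos unfolding langevin_FP_def q_def by blast
    have eq: "dd y = divg G y - FI y" for y
    proof -
      have rpos: "p t x y / q t y > 0" using p_pos t_pos qpos[of y] by simp
      have dPhi: "Phi differentiable (at (p t x y / q t y))" and ddPhi: "deriv Phi differentiable (at (p t x y / q t y))"
        using Phi_C2_int rpos by auto
      have "dd y = deriv Phi (p t x y / q t y) * divg (langevin_flux f (p t x)) y
          + (Phi (p t x y / q t y) - p t x y / q t y * deriv Phi (p t x y / q t y)) * divg (langevin_flux f (q t)) y"
        unfolding dd_def
        by (rule time_deriv[where p = "\<lambda>s. p s x y" and q = "\<lambda>s. q s y"]) (use FPp FPq qpos dPhi in auto)
      moreover have "divg G y = deriv Phi (p t x y / q t y) * divg (langevin_flux f (p t x)) y
          + (Phi (p t x y / q t y) - p t x y / q t y * deriv Phi (p t x y / q t y)) * divg (langevin_flux f (q t)) y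
          + FI y"
        unfolding G_def FI_def
        by (rule pointwise_div) (use FPp FPq qpos dPhi ddPhi in auto)
      ultimately show ?thesis by simp
    qed
    have ddi: "integrable lborel dd" using reg_int unfolding dd_def q_def by blast
    have FIeq: "FI = (\<lambda>y. divg G y - dd y)" using eq by auto
    have FIi: "integrable lborel FI" unfolding FIeq using divG(1) ddi by auto
    have "(\<integral>y. dd y \<partial>lborel) = (\<integral>y. divg G y - FI y \<partial>lborel)" using eq by simp
    also have "\<dots> = - (\<integral>y. FI y \<partial>lborel)" using divG FIi by simp
    also have "(\<integral>y. FI y \<partial>lborel) = phi_fisher Phi (p t x) (marginal rho0 (p t))"
      unfolding FI_def phi_fisher_def q_def ..
    finally show ?thesis unfolding dd_def q_def .
  qed
  have "(\<integral>x. deriv (\<lambda>s. phi_div Phi (p s x) (marginal rho0 (p s))) t \<partial>rho0)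
      = (\<integral>x. - phi_fisher Phi (p t x) (marginal rho0 (p t)) \<partial>rho0)"
    using DERIV_imp_deriv[OF reg_inner[rule_format]] inner by simp
  also have "\<dots> = - phi_MFI Phi rho0 (p t)" unfolding phi_MFI_def by simp
  finally show ?thesis using reg_outer by simp
qed

end
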